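(* Let $\varepsilon_1,\varepsilon_2,\ldots$ be independent random variables uniformly distributed on $[0,1]$ (hypothesis $H_0^{U[0,1]}$), and let the integers $m\ge2$ and $r_{bits}\ge1$ be fixed (independent of $n$). Then there exists a quadratic statistic $T_{quad}$ (whose parameters do not depend on $n$), built from summing statistics of the sequence $\varepsilon_1,\ldots,\varepsilon_n$ with $\mathfrak{X}=[0,1]$ and $\mathbf{P}_0$ the uniform distribution on $[0,1]$, such that $T_{SO}-T_{quad}\xrightarrow{\mathbf{P}}0$ as $n\to\infty$.
   Context: $g_{bits}:[0,1]\to\{0,1\}^{r_{bits}}$ is a fixed function assigning to each number in $[0,1]$ a fixed selection of $r_{bits}$ bits of its binary expansion (so that for $\varepsilon$ uniform on $[0,1]$, $g_{bits}(\varepsilon)$ is uniform on $\{0,1\}^{r_{bits}}$). Put $R=2^{r_{bits}}$, $\varkappa_i=g_{bits}(\varepsilon_i)$, and let $k_0,\ldots,k_{R-1}$ be the elements of $\{0,1\}^{r_{bits}}$. Let $\tilde\varkappa_i=\varkappa_i$ for $i\le n$ and $\tilde\varkappa_i=\varkappa_{i-n}$ for $i>n$. For $d\in\{m-1,m\}$ and $(i_1,\ldots,i_d)\in\{k_0,\ldots,k_{R-1}\}^d$, $\nu_{i_1,\ldots,i_d}=\sum_{i=1}^nI\{(\tilde\varkappa_i,\ldots,\tilde\varkappa_{i+d-1})=(i_1,\ldots,i_d)\}$ (cyclic counts). $T_{SO}=\frac{R^m}{n}\sum_{i_1,\ldots,i_m}(\nu_{i_1,\ldots,i_m}-\frac{n}{R^m})^2-\frac{R^{m-1}}{n}\sum_{i_1,\ldots,i_{m-1}}(\nu_{i_1,\ldots,i_{m-1}}-\frac{n}{R^{m-1}})^2$,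 sums over $\{k_0,\ldots,k_{R-1}\}^m$ resp. $^{m-1}$. Summing statistic (here with $\mathfrak{X}=[0,1]$, $\mathbf{E}_{H_0},\mathbf{D}_{H_0},\mathrm{cov}_{H_0}$ under i.i.d. uniform $\varepsilon_i$): for a natural number $m_{sum}$ and measurable $f_{sum}:[0,1]^{m_{sum}}\to\mathbb{R}$, let $E_{sum}=\mathbf{E}_{H_0}f_{sum}(\varepsilon_1,\ldots,\varepsilon_{m_{sum}})$, $\sigma^2_{sum}=\mathbf{D}_{H_0}f_{sum}(\varepsilon_1,\ldots,\varepsilon_{m_{sum}})+2\sum_{i=2}^{m_{sum}}\mathrm{cov}_{H_0}(f_{sum}(\varepsilon_i,\ldots,\varepsilon_{i+m_{sum}-1}),f_{sum}(\varepsilon_1,\ldots,\varepsilon_{m_{sum}}))$, $\sigma_{sum}\ge0$; if $\sigma_{sum}\in(0,\infty)$, the summing statistic is $T_{sum}=\frac{\sum_{i=1}^{n-m_{sum}+1}(f_{sum}(\varepsilon_i,\ldots,\varepsilon_{i+m_{sum}-1})-E_{sum})}{\sigma_{sum}\sqrt{n-m_{sum}+1}}$. A quadratic statistic is $T_{quad}=\sum_{i=1}^{\tau}\big(\sum_{q=1}^{Q}d(i,q)T^{[q]}_{sum}\big)^2$ for some natural $\tau,Q$, reals $d(i,q)$, and summing statistics $T^{[1]}_{sum},\ldots,T^{[Q]}_{sum}$ (with fixed $m^{[q]}_{sum}$, $f^{[q]}_{sum}$); equivalently a nonnegative definite quadratic form of summing statistics with coefficients independent of $n$. *)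

theory Defs
  imports "HOL-Probability.Probability"
begin

text \<open>Code of the selected bits: bit number p j (j < r, p j \<ge> 1) of the binary
  expansion of x, encoded as the natural number sum_j bit_j * 2^j in {0..<2^r}.
  This is a bijective encoding of the element of {0,1}^r.\<close>
definition bit_sel :: "(nat \<Rightarrow> nat) \<Rightarrow> nat \<Rightarrow> real \<Rightarrow> nat" where
  "bit_sel p r x = (\<Sum>j<r. (nat \<lfloor>x * 2 ^ p j\<rfloor> mod 2) * 2 ^ j)"

definition words :: "nat \<Rightarrow> nat \<Rightarrow> nat list set" where
  "words R d = {w. length w = d \<and> set w \<subseteq> {..<R}}"

text \<open>Cyclic counts; indices are 0-based: kap i is the code of epsilon_(i+1).\<close>
definition cyc_count :: "(nat \<Rightarrow> 'a \<Rightarrow> nat) \<Rightarrow> nat \<Rightarrow> nat list \<Rightarrow> 'a \<Rightarrow> nat" where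
  "cyc_count kap n w \<omega> = card {i. i < n \<and> (\<forall>j<length w. kap ((i + j) mod n) \<omega> = w ! j)}"

definition T_SO :: "(nat \<Rightarrow> 'a \<Rightarrow> nat) \<Rightarrow> nat \<Rightarrow> nat \<Rightarrow> nat \<Rightarrow> 'a \<Rightarrow> real" where
  "T_SO kap R m n \<omega> =
     real R ^ m / real n * (\<Sum>w\<in>words R m. (real (cyc_count kap n w \<omega>) - real n / real R ^ m)\<^sup>2)
   - real R ^ (m - 1) / real n *
       (\<Sum>w\<in>words R (m - 1). (real (cyc_count kap n w \<omega>) - real n / real R ^ (m - 1))\<^sup>2)"

text \<open>Window value f(eps_(i+1), ..., eps_(i+m)) (0-based i).\<close>
definition window :: "(nat \<Rightarrow> 'a \<Rightarrow> real) \<Rightarrow> nat \<Rightarrow> ((nat \<Rightarrow> real) \<Rightarrow> real) \<Rightarrow> nat \<Rightarrow> 'a \<Rightarrow> real" where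
  "window eps m f i \<omega> = f (restrict (\<lambda>j. eps (i + j) \<omega>) {..<m})"

definition covar :: "'a measure \<Rightarrow> ('a \<Rightarrow> real) \<Rightarrow> ('a \<Rightarrow> real) \<Rightarrow> real" where
  "covar M X Y = (\<integral>\<omega>. (X \<omega> - (\<integral>x. X x \<partial>M)) * (Y \<omega> - (\<integral>x. Y x \<partial>M)) \<partial>M)"

definition sum_E :: "'a measure \<Rightarrow> (nat \<Rightarrow> 'a \<Rightarrow> real) \<Rightarrow> nat \<Rightarrow> ((nat \<Rightarrow> real) \<Rightarrow> real) \<Rightarrow> real" where
  "sum_E M eps m f = (\<integral>\<omega>. window eps m f 0 \<omega> \<partial>M)"

definition sum_sigma2 :: "'a measure \<Rightarrow> (nat \<Rightarrow> 'a \<Rightarrow> real) \<Rightarrow> nat \<Rightarrow> ((nat \<Rightarrow> real) \<Rightarrow> real) \<Rightarrow> real" where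
  "sum_sigma2 M eps m f =
     covar M (window eps m f 0) (window eps m f 0)
     + 2 * (\<Sum>i\<in>{1..<m}. covar M (window eps m f i) (window eps m f 0))"

definition valid_summing :: "'a measure \<Rightarrow> (nat \<Rightarrow> 'a \<Rightarrow> real) \<Rightarrow> nat \<Rightarrow> ((nat \<Rightarrow> real) \<Rightarrow> real) \<Rightarrow> bool" where
  "valid_summing M eps m f \<longleftrightarrow> m \<ge> 1
     \<and> f \<in> borel_measurable (PiM {..<m} (\<lambda>_. borel))
     \<and> integrable M (window eps m f 0)
     \<and> integrable M (\<lambda>\<omega>. (window eps m f 0 \<omega>)\<^sup>2)
     \<and> sum_sigma2 M eps m f > 0"

definition sum_stat :: "'a measure \<Rightarrow> (nat \<Rightarrow> 'a \<Rightarrow> real) \<Rightarrow> nat \<Rightarrow> ((nat \<Rightarrow> real) \<Rightarrow> real) \<Rightarrow> nat \<Rightarrow> 'a \<Rightarrow> real" where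
  "sum_stat M eps m f n \<omega> =
     (\<Sum>i<n + 1 - m. window eps m f i \<omega> - sum_E M eps m f)
       / (sqrt (sum_sigma2 M eps m f) * sqrt (real (n + 1 - m)))"

definition T_quad :: "'a measure \<Rightarrow> (nat \<Rightarrow> 'a \<Rightarrow> real) \<Rightarrow> nat \<Rightarrow> nat \<Rightarrow> (nat \<Rightarrow> nat \<Rightarrow> real)
    \<Rightarrow> (nat \<Rightarrow> nat) \<Rightarrow> (nat \<Rightarrow> (nat \<Rightarrow> real) \<Rightarrow> real) \<Rightarrow> nat \<Rightarrow> 'a \<Rightarrow> real" where
  "T_quad M eps \<tau> Q d ms fs n \<omega> =
     (\<Sum>i<\<tau>. (\<Sum>q<Q. d i q * sum_stat M eps (ms q) (fs q) n \<omega>)\<^sup>2)"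

definition conv_prob_zero :: "'a measure \<Rightarrow> (nat \<Rightarrow> 'a \<Rightarrow> real) \<Rightarrow> bool" where
  "conv_prob_zero M X \<longleftrightarrow>
     (\<forall>e>0. (\<lambda>n. measure M {\<omega> \<in> space M. e < \<bar>X n \<omega>\<bar>}) \<longlonglongrightarrow> 0)"

end

theory Submission
  imports Defs
begin


lemma bit_add_pow:
  fixes s :: nat assumes "s < 2^P"
  shows "bit (s + 2^P) q \<longleftrightarrow> (q = P \<or> bit s q)"
proof -
  have "\<not> bit s P" using assms
    by (simp add: bit_iff_odd)
  then have "bit (s + 2^P) q \<longleftrightarrow> bit s q \<or> bit ((2::nat)^P) q"
    by (intro bit_disjunctive_add_iff) (auto simp: bit_exp_iff)
  then show ?thesis by (auto simp: bit_exp_iff)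
qed

lemma not_bit_small: assumes "(s::nat) < 2^P" "P \<le> q" shows "\<not> bit s q"
proof -
  have "s < 2^q" using assms by (meson less_le_trans one_le_numeral power_increasing)
  then show ?thesis by (simp add: bit_iff_odd)
qed

lemma count_bits:
  "finite Q \<Longrightarrow> Q \<subseteq> {..<P} \<Longrightarrow>
    card {t::nat. t < 2^P \<and> (\<forall>q\<in>Q. bit t q = b q)} = 2^(P - card Q)"
proof (induction P arbitrary: Q)
  case 0
  then have "Q = {}" by auto
  then show ?case by simp
next
  case (Suc P)
  define S where "S Q' = {t::nat. t < 2^P \<and> (\<forall>q\<in>Q'. bit t q = b q)}" for Q'
  define Q' where "Q' = Q - {P}"
  have fQ': "finite Q'" "Q' \<subseteq> {..<P}" using Suc.prems by (auto simp: Q'_def)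
  have IH: "card (S Q') = 2^(P - card Q')" using Suc.IH[OF fQ'] by (simp add: S_def)
  have split: "{t::nat. t < 2^Suc P \<and> (\<forall>q\<in>Q. bit t q = b q)}
     = {t. t < 2^P \<and> (\<forall>q\<in>Q. bit t q = b q)} \<union> (\<lambda>s. s + 2^P) ` {s. s < 2^P \<and> (\<forall>q\<in>Q. bit (s + 2^P) q = b q)}"
    (is "?L = ?A \<union> ?B")
  proof (intro set_eqI iffI)
    fix t assume t: "t \<in> ?L"
    show "t \<in> ?A \<union> ?B"
    proof (cases "t < 2^P")
      case True then show ?thesis using t by auto
    next
      case False
      then have "t = (t - 2^P) + 2^P" "t - 2^P < 2^P" using t by auto
      then show ?thesis using t by (auto intro!: image_eqI[where x="t - 2^P"])
    qed
  qed auto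
  have disj: "?A \<inter> ?B = {}" by auto
  have inj: "inj_on (\<lambda>s::nat. s + 2^P) X" for X by (auto simp: inj_on_def)
  have cardL: "card ?L = card ?A + card {s::nat. s < 2^P \<and> (\<forall>q\<in>Q. bit (s + 2^P) q = b q)}"
    unfolding split by (subst card_Un_disjoint) (auto simp: card_image[OF inj])
  have B_eq: "{s::nat. s < 2^P \<and> (\<forall>q\<in>Q. bit (s + 2^P) q = b q)}
       = {s. s < 2^P \<and> (\<forall>q\<in>Q. (q = P \<or> bit s q) = b q)}"
    using bit_add_pow by auto
  show ?case
  proof (cases "P \<in> Q")
    case True
    have cQ: "card Q = Suc (card Q')" using True Suc.prems unfolding Q'_def
      by (metis card_Suc_Diff1)
    have A2: "?A = {t. t < 2^P \<and> \<not> b P \<and> (\<forall>q\<in>Q'. bit t q = b q)}"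
      using True not_bit_small[of _ P P] unfolding Q'_def by auto
    have B2: "{s::nat. s < 2^P \<and> (\<forall>q\<in>Q. (q = P \<or> bit s q) = b q)}
       = {t. t < 2^P \<and> b P \<and> (\<forall>q\<in>Q'. bit t q = b q)}"
      using True unfolding Q'_def by auto
    show ?thesis
    proof (cases "b P")
      case True
      then show ?thesis using cardL B_eq A2 B2 IH cQ by (simp add: S_def)
    next
      case False
      then show ?thesis using cardL B_eq A2 B2 IH cQ by (simp add: S_def)
    qed
  next
    case False
    then have QQ: "Q' = Q" by (simp add: Q'_def)
    have B2: "{s::nat. s < 2^P \<and> (\<forall>q\<in>Q. (q = P \<or> bit s q) = b q)} = S Q'"
      using False QQ unfolding S_def by auto
    have A2: "?A = S Q'" using QQ by (simp add: S_def)
    have "card Q \<le> P" using fQ' QQ by (metis card_lessThan card_mono finite_lessThan)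
    then have "2^(P - card Q) + 2^(P - card Q) = (2::nat)^(Suc P - card Q)"
      by (simp add: Suc_diff_le)
    then show ?thesis using cardL B_eq A2 B2 IH QQ by simp
  qed
qed


lemma bin_sum_less: "(\<Sum>j<r. of_bool (c j) * 2^j :: nat) < 2^r"
proof (induction r)
  case 0 then show ?case by simp
next
  case (Suc r) then show ?case by (cases "c r") auto
qed

lemma bin_sum_bit: "bit (\<Sum>j<r. of_bool (c j) * 2^j :: nat) k \<longleftrightarrow> (k < r \<and> c k)"
proof (induction r)
  case 0 then show ?case by simp
next
  case (Suc r)
  show ?case
  proof (cases "c r")
    case True
    then have "(\<Sum>j<Suc r. of_bool (c j) * 2^j :: nat) = (\<Sum>j<r. of_bool (c j) * 2^j) + 2^r" by simp
    then show ?thesis using bit_add_pow[OF bin_sum_less[where r=r and c=c], of k] Suc True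
      by (auto simp: less_Suc_eq)
  next
    case False
    then show ?thesis using Suc by (auto simp: less_Suc_eq)
  qed
qed

lemma bin_eq:
  assumes "(a::nat) < 2^r"
  shows "((\<Sum>j<r. of_bool (c j) * 2^j) = a) \<longleftrightarrow> (\<forall>j<r. c j = bit a j)"
proof
  assume "(\<Sum>j<r. of_bool (c j) * 2^j) = a"
  then show "\<forall>j<r. c j = bit a j" using bin_sum_bit[where r=r and c=c] by auto
next
  assume h: "\<forall>j<r. c j = bit a j"
  have "\<forall>k. bit (\<Sum>j<r. of_bool (c j) * 2^j :: nat) k = bit a k"
  proof
    fix k
    show "bit (\<Sum>j<r. of_bool (c j) * 2^j :: nat) k = bit a k"
      using h bin_sum_bit[where r=r and c=c and k=k] not_bit_small[OF assms, of k] by (cases "k < r") auto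
  qed
  then show "(\<Sum>j<r. of_bool (c j) * 2^j) = a" by (simp add: bit_eq_iff)
qed

lemma nat_floor_shift:
  fixes x :: real assumes "k \<le> P"
  shows "nat \<lfloor>x * 2^k\<rfloor> = nat \<lfloor>x * 2^P\<rfloor> div 2^(P-k)"
proof -
  have e0: "real_of_int (2^(P-k)) = (2::real)^(P-k)"
    by (metis of_int_numeral of_int_power)
  have e: "real_of_int (2^(P-k)) = 2^P / 2^k"
    unfolding e0 using assms by (simp add: power_diff)
  have "x * 2^k = x * 2^P / real_of_int (2^(P-k))"
    unfolding e by simp
  moreover have "\<lfloor>x * 2^P / real_of_int (2^(P-k))\<rfloor> = \<lfloor>x * 2^P\<rfloor> div 2^(P-k)"
    by (rule floor_divide_real_eq_div) simp
  ultimately have "\<lfloor>x * 2^k\<rfloor> = \<lfloor>x * 2^P\<rfloor> div 2^(P-k)"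
    by simp
  moreover have "nat (a div 2^(P-k)) = nat a div 2^(P-k)" for a :: int
  proof (cases "a \<ge> 0")
    case True then show ?thesis by (simp add: nat_div_distrib nat_power_eq)
  next
    case False
    then have "a div 2^(P-k) < 0" by (simp add: div_neg_pos_less0)
    then show ?thesis using False by simp
  qed
  ultimately show ?thesis by simp
qed

definition beta :: "(nat \<Rightarrow> nat) \<Rightarrow> nat \<Rightarrow> nat \<Rightarrow> nat \<Rightarrow> nat" where
  "beta p r P t = (\<Sum>j<r. of_bool (bit t (P - p j)) * 2^j)"

lemma bit_sel_beta:
  assumes "\<forall>j<r. p j \<le> P"
  shows "bit_sel p r x = beta p r P (nat \<lfloor>x * 2^P\<rfloor>)"
  unfolding bit_sel_def beta_def
proof (intro sum.cong refl)
  fix j assume "j \<in> {..<r}"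
  then have "nat \<lfloor>x * 2^p j\<rfloor> = nat \<lfloor>x * 2^P\<rfloor> div 2^(P - p j)"
    using assms by (intro nat_floor_shift) auto
  then show "nat \<lfloor>x * 2 ^ p j\<rfloor> mod 2 * 2 ^ j = of_bool (bit (nat \<lfloor>x * 2 ^ P\<rfloor>) (P - p j)) * 2 ^ j"
    by (simp add: bit_iff_odd mod2_eq_if)
qed

lemma bit_sel_less: "bit_sel p r x < 2^r"
proof -
  have "bit_sel p r x = (\<Sum>j<r. of_bool (odd (nat \<lfloor>x * 2^p j\<rfloor>)) * 2^j)"
    unfolding bit_sel_def by (intro sum.cong refl) (simp add: mod2_eq_if)
  then show ?thesis using bin_sum_less by simp
qed

lemma bit_sel_measurable[measurable]: "bit_sel p r \<in> borel \<rightarrow>\<^sub>M count_space UNIV"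
proof -
  define P where "P = Max (p ` {..<r})"
  have "\<forall>j<r. p j \<le> P" unfolding P_def by (auto intro: Max_ge)
  then have eq: "bit_sel p r = (\<lambda>x. beta p r P (nat \<lfloor>x * 2^P\<rfloor>))"
    using bit_sel_beta by blast
  show ?thesis unfolding eq by measurable
qed


lemma ivl_floor:
  fixes x :: real
  shows "(real t / 2^P \<le> x \<and> x < (real t + 1) / 2^P) \<longleftrightarrow> \<lfloor>x * 2^P\<rfloor> = int t"
  by (simp add: floor_eq_iff field_simps)

lemma code_lborel:
  assumes r1: "r \<ge> 1" and injp: "inj_on p {..<r}" and p1: "\<forall>j<r. p j \<ge> 1" and a: "a < 2^r"
  shows "measure lborel ({x. bit_sel p r x = a} \<inter> {0..1}) = 1/2^r"
proof -
  define P where "P = Max (p ` {..<r})"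
  have hp: "\<forall>j<r. p j \<le> P" unfolding P_def by (auto intro: Max_ge)
  have P1: "P \<ge> 1" using hp p1 r1 by (meson le_trans less_le_trans zero_less_one)
  define qf where "qf j = P - p j" for j
  define Qs where "Qs = qf ` {..<r}"
  have injq: "inj_on qf {..<r}"
    using injp hp unfolding qf_def inj_on_def
    by (metis diff_diff_cancel lessThan_iff)
  have cardQ: "card Qs = r" unfolding Qs_def using card_image[OF injq] by simp
  have Qsub: "Qs \<subseteq> {..<P}" unfolding Qs_def qf_def using p1 P1 by auto
  have rP: "r \<le> P" using cardQ Qsub by (metis card_lessThan card_mono finite_lessThan)
  define b where "b q = bit a (the_inv_into {..<r} qf q)" for q
  define S where "S = {t::nat. t < 2^P \<and> (\<forall>q\<in>Qs. bit t q = b q)}"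
  have cardS: "card S = 2^(P - r)"
    unfolding S_def using count_bits[of Qs P b] Qsub cardQ by (simp add: Qs_def)
  have beta_iff: "beta p r P t = a \<longleftrightarrow> (\<forall>q\<in>Qs. bit t q = b q)" for t
  proof -
    have "beta p r P t = a \<longleftrightarrow> (\<forall>j<r. bit t (qf j) = bit a j)"
      unfolding beta_def qf_def by (rule bin_eq[OF a])
    also have "\<dots> \<longleftrightarrow> (\<forall>q\<in>Qs. bit t q = b q)"
      unfolding Qs_def b_def using the_inv_into_f_f[OF injq] by auto
    finally show ?thesis .
  qed
  define I where "I t = {real t / 2^P ..< (real t + 1) / 2^P}" for t :: nat
  have seteq: "{x. bit_sel p r x = a} \<inter> {0..<1} = (\<Union>t\<in>S. I t)"
  proof (intro set_eqI iffI)
    fix x assume x: "x \<in> {x. bit_sel p r x = a} \<inter> {0..<1}"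
    define t where "t = nat \<lfloor>x * 2^P\<rfloor>"
    have x0: "0 \<le> x" "x < 1" using x by auto
    have ft: "\<lfloor>x * 2^P\<rfloor> = int t" unfolding t_def using x0 by simp
    have "x * 2^P < 2^P" using x0 by simp
    moreover have "real t \<le> x * 2^P" using ft by (metis of_int_floor_le of_int_of_nat_eq)
    ultimately have "real t < 2^P" by linarith
    then have "t < 2^P" by (metis of_nat_less_numeral_power_cancel_iff)
    moreover have "beta p r P t = a" using x bit_sel_beta[OF hp, of x] unfolding t_def by simp
    ultimately have "t \<in> S" unfolding S_def using beta_iff by auto
    moreover have "x \<in> I t" unfolding I_def using ivl_floor[of t P x] ft by simp
    ultimately show "x \<in> (\<Union>t\<in>S. I t)" by blast
  next
    fix x assume "x \<in> (\<Union>t\<in>S. I t)"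
    then obtain t where t: "t \<in> S" "x \<in> I t" by blast
    have ft: "\<lfloor>x * 2^P\<rfloor> = int t" using t(2) ivl_floor[of t P x] unfolding I_def by simp
    have "0 \<le> real t / 2^P" by simp
    moreover have "real t / 2^P \<le> x" using t(2) unfolding I_def by simp
    ultimately have x0: "0 \<le> x" by linarith
    have "t + 1 \<le> 2^P" using t(1) unfolding S_def by simp
    then have "real (t + 1) \<le> real ((2::nat)^P)" by (simp only: of_nat_le_iff)
    then have "real t + 1 \<le> 2^P" by simp
    then have "(real t + 1) / 2^P \<le> 1" by simp
    moreover have "x < (real t + 1) / 2^P" using t(2) unfolding I_def by simp
    ultimately have x1: "x < 1" by linarith
    have "bit_sel p r x = a" using bit_sel_beta[OF hp, of x] ft t(1) beta_iff unfolding S_def by simp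
    then show "x \<in> {x. bit_sel p r x = a} \<inter> {0..<1}" using x0 x1 by simp
  qed
  have finS: "finite S" unfolding S_def by simp
  have disj: "disjoint_family_on I S"
    unfolding disjoint_family_on_def
  proof (intro ballI impI)
    fix s t assume "s \<in> S" "t \<in> S" "s \<noteq> t"
    show "I s \<inter> I t = {}"
    proof (rule ccontr)
      assume "I s \<inter> I t \<noteq> {}"
      then obtain x where "x \<in> I s" "x \<in> I t" by blast
      then have "\<lfloor>x * 2^P\<rfloor> = int s" "\<lfloor>x * 2^P\<rfloor> = int t"
        using ivl_floor unfolding I_def by auto
      then show False using \<open>s \<noteq> t\<close> by simp
    qed
  qed
  have mI: "measure lborel (I t) = 1 / 2^P" for t
    unfolding I_def by (simp add: field_simps)
  have "measure lborel (\<Union>t\<in>S. I t) = (\<Sum>t\<in>S. measure lborel (I t))"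
    by (rule measure_finite_Union[OF finS _ disj]) (auto simp: I_def divide_right_mono emeasure_lborel_Ico)
  also have "\<dots> = real (card S) / 2^P" using mI by simp
  also have "\<dots> = (2::real)^(P-r) / 2^P" using cardS by (metis of_nat_numeral of_nat_power)
  also have "\<dots> = 1/2^r" using rP by (simp add: power_diff)
  finally have m1: "measure lborel ({x. bit_sel p r x = a} \<inter> {0..<1}) = 1/2^r"
    using seteq by simp
  have "{x. bit_sel p r x = a} \<inter> {0..1} = ({x. bit_sel p r x = a} \<inter> {0..<1}) \<union> ({x. bit_sel p r x = a} \<inter> {1})"
    by auto
  moreover have "({x. bit_sel p r x = a} \<inter> {1}) \<in> null_sets lborel"
    by (rule countable_imp_null_set_lborel) (simp add: countable_finite)
  moreover have "{x. bit_sel p r x = a} \<inter> {0..<1} \<in> sets lborel" by measurable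
  ultimately show ?thesis using m1 by (simp add: measure_Un_null_set)
qed




definition phi :: "nat \<Rightarrow> nat \<Rightarrow> nat list \<Rightarrow> (nat \<Rightarrow> nat) \<Rightarrow> real" where
  "phi R m w \<kappa> = of_bool (\<forall>j<m-1. \<kappa> j = w!j) * (of_bool (\<kappa> (m-1) = w!(m-1)) - 1 / real R)"

lemma phi_cong:
  assumes "\<And>j. j < m \<Longrightarrow> \<kappa> j = \<kappa>' j" "1 \<le> m"
  shows "phi R m w \<kappa> = phi R m w \<kappa>'"
proof -
  have "(\<forall>j<m-1. \<kappa> j = w!j) = (\<forall>j<m-1. \<kappa>' j = w!j)" using assms by auto
  moreover have "\<kappa> (m-1) = \<kappa>' (m-1)" using assms by auto
  ultimately show ?thesis unfolding phi_def by simp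
qed

lemma phi_abs: "R \<ge> 1 \<Longrightarrow> \<bar>phi R m w \<kappa>\<bar> \<le> 1"
  unfolding phi_def by (auto simp: field_simps)

lemma comp_meas[measurable]: "(\<lambda>y. y l) \<in> borel_measurable (PiM I (\<lambda>_. borel :: real measure))"
proof (cases "l \<in> I")
  case True then show ?thesis by (rule measurable_component_singleton)
next
  case False
  have "\<forall>y\<in>space (PiM I (\<lambda>_. borel :: real measure)). y l = undefined"
    using False by (auto simp: space_PiM PiE_def extensional_def)
  then show ?thesis
    using measurable_cong[of "PiM I (\<lambda>_. borel :: real measure)" "\<lambda>y. y l" "\<lambda>y. undefined" borel]
    by simp
qed

locale lsetup = prob_space M for M :: "'a measure" +
  fixes eps :: "nat \<Rightarrow> 'a \<Rightarrow> real" and m r :: nat and p :: "nat \<Rightarrow> nat"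
  assumes ind: "indep_vars (\<lambda>_. borel) eps UNIV"
    and distr_eps: "\<forall>i. distr M lborel (eps i) = uniform_measure lborel {0..1}"
    and m2: "m \<ge> 2" and r1: "r \<ge> 1" and injp: "inj_on p {..<r}" and p1: "\<forall>j<r. p j \<ge> 1"
begin

lemma eps_meas[measurable]: "eps i \<in> borel_measurable M"
  using ind unfolding indep_vars_def by auto

abbreviation "R \<equiv> (2::nat)^r"

lemma R2: "real R \<ge> 2"
proof -
  have "(2::nat)^1 \<le> 2^r" using r1 by (intro power_increasing) auto
  then show ?thesis by (metis of_nat_le_iff of_nat_numeral power_one_right)
qed

lemma code_prob:
  assumes a: "a < R"
  shows "prob {\<omega>\<in>space M. bit_sel p r (eps k \<omega>) = a} = 1 / 2^r"
proof -
  define C where "C = {x. bit_sel p r x = a}"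
  have C: "C \<in> sets borel" unfolding C_def by measurable
  have "{\<omega>\<in>space M. bit_sel p r (eps k \<omega>) = a} = eps k -` C \<inter> space M" unfolding C_def by auto
  moreover have "measure M (eps k -` C \<inter> space M) = measure (distr M lborel (eps k)) C"
    by (rule measure_distr[symmetric]) (use C in auto)
  moreover have "measure (distr M lborel (eps k)) C = measure lborel ({0..1} \<inter> C) / measure lborel {0..1::real}"
    using distr_eps C by simp
  moreover have "measure lborel ({0..1} \<inter> C) = 1/2^r"
    using code_lborel[OF r1 injp p1 a] unfolding C_def by (simp add: Int_commute)
  ultimately show ?thesis by simp
qed

lemma exp_ind:
  assumes [measurable]: "Measurable.pred M P"
  shows "expectation (\<lambda>\<omega>. of_bool (P \<omega>)) = prob {\<omega>\<in>space M. P \<omega>}"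
proof -
  have "expectation (\<lambda>\<omega>. of_bool (P \<omega>)) = expectation (indicator {\<omega>\<in>space M. P \<omega>})"
    by (rule Bochner_Integration.integral_cong) (auto simp: indicator_def)
  also have "\<dots> = prob {\<omega>\<in>space M. P \<omega>}" by simp
  finally show ?thesis .
qed

lemma integrable_bdd:
  fixes f :: "'a \<Rightarrow> real"
  assumes "f \<in> borel_measurable M" "\<forall>\<omega>. \<bar>f \<omega>\<bar> \<le> B"
  shows "integrable M f"
  using assms by (intro integrable_const_bound[where B=B]) auto

lemma indep_prod:
  fixes G :: "(nat \<Rightarrow> real) \<Rightarrow> real" and h :: "real \<Rightarrow> real"
  assumes G[measurable]: "G \<in> borel_measurable (PiM {..<k} (\<lambda>_. borel))" and Gb: "\<forall>y. \<bar>G y\<bar> \<le> Bg"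
    and h[measurable]: "h \<in> borel_measurable borel" and hb: "\<forall>x. \<bar>h x\<bar> \<le> Bh"
  shows "expectation (\<lambda>\<omega>. G (restrict (\<lambda>j. eps j \<omega>) {..<k}) * h (eps k \<omega>)) =
         expectation (\<lambda>\<omega>. G (restrict (\<lambda>j. eps j \<omega>) {..<k})) * expectation (\<lambda>\<omega>. h (eps k \<omega>))"
proof -
  have iv: "indep_var (PiM {..<k} (\<lambda>_. borel)) (\<lambda>\<omega>. restrict (\<lambda>j. eps j \<omega>) {..<k})
      (PiM {k} (\<lambda>_. borel)) (\<lambda>\<omega>. restrict (\<lambda>j. eps j \<omega>) {k})"
    by (rule indep_var_restrict[OF ind]) auto
  have h2: "(\<lambda>z. h (z k)) \<in> borel_measurable (PiM {k} (\<lambda>_. borel))" by measurable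
  have iv2: "indep_var borel (G \<circ> (\<lambda>\<omega>. restrict (\<lambda>j. eps j \<omega>) {..<k}))
     borel ((\<lambda>z. h (z k)) \<circ> (\<lambda>\<omega>. restrict (\<lambda>j. eps j \<omega>) {k}))"
    by (rule indep_var_compose[OF iv G h2])
  have e2: "((\<lambda>z. h (z k)) \<circ> (\<lambda>\<omega>. restrict (\<lambda>j. eps j \<omega>) {k})) = (\<lambda>\<omega>. h (eps k \<omega>))"
    by (auto simp: fun_eq_iff)
  have e1: "(G \<circ> (\<lambda>\<omega>. restrict (\<lambda>j. eps j \<omega>) {..<k})) = (\<lambda>\<omega>. G (restrict (\<lambda>j. eps j \<omega>) {..<k}))"
    by (simp add: comp_def)
  have int1: "integrable M (\<lambda>\<omega>. G (restrict (\<lambda>j. eps j \<omega>) {..<k}))"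
    by (rule integrable_bdd[where B=Bg]) (use Gb in auto)
  have int2: "integrable M (\<lambda>\<omega>. h (eps k \<omega>))"
    by (rule integrable_bdd[where B=Bh]) (use hb in auto)
  show ?thesis using indep_var_lebesgue_integral[OF iv2[unfolded e1 e2] int1 int2] .
qed

definition fw :: "nat list \<Rightarrow> (nat \<Rightarrow> real) \<Rightarrow> real" where
  "fw w = (\<lambda>x. phi R m w (\<lambda>j. bit_sel p r (x j)))"

lemma fw_meas[measurable]: "fw w \<in> borel_measurable (PiM I (\<lambda>_. borel))"
  unfolding fw_def phi_def by measurable

lemma window_fw: "window eps m (fw w) i \<omega> = phi R m w (\<lambda>j. bit_sel p r (eps (i+j) \<omega>))"
  unfolding window_def fw_def by (rule phi_cong) (use m2 in auto)

lemma h_mean: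
  assumes "a < R"
  shows "expectation (\<lambda>\<omega>. of_bool (bit_sel p r (eps k \<omega>) = a) - 1 / real R) = 0"
proof -
  have "expectation (\<lambda>\<omega>. of_bool (bit_sel p r (eps k \<omega>) = a) - 1 / real R)
      = expectation (\<lambda>\<omega>. of_bool (bit_sel p r (eps k \<omega>) = a)) - 1 / real R"
    by (subst Bochner_Integration.integral_diff) (auto intro!: integrable_bdd[where B=1] simp: prob_space)
  also have "\<dots> = 0" using exp_ind[of "\<lambda>\<omega>. bit_sel p r (eps k \<omega>) = a"] code_prob[OF assms, of k] by simp
  finally show ?thesis .
qed

lemma words_nth: "w \<in> words R' m' \<Longrightarrow> j < m' \<Longrightarrow> w!j < R'"
  unfolding words_def by (auto dest!: nth_mem)

lemma h_bdd: "\<bar>of_bool b - 1 / real R\<bar> \<le> 1"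
  using R2 by (auto simp: field_simps)

lemma mean0:
  assumes w: "w \<in> words R m"
  shows "expectation (\<lambda>\<omega>. phi R m w (\<lambda>j. bit_sel p r (eps (i+j) \<omega>))) = 0"
proof -
  define k where "k = i + (m-1)"
  define G where "G y = (of_bool (\<forall>j<m-1. bit_sel p r (y (i+j)) = w!j) :: real)" for y :: "nat \<Rightarrow> real"
  define h where "h x = of_bool (bit_sel p r x = w!(m-1)) - 1/real R" for x
  have eq: "phi R m w (\<lambda>j. bit_sel p r (eps (i+j) \<omega>)) = G (restrict (\<lambda>j. eps j \<omega>) {..<k}) * h (eps k \<omega>)" for \<omega>
    unfolding phi_def G_def h_def k_def using m2 by auto
  have "expectation (\<lambda>\<omega>. phi R m w (\<lambda>j. bit_sel p r (eps (i+j) \<omega>)))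
      = expectation (\<lambda>\<omega>. G (restrict (\<lambda>j. eps j \<omega>) {..<k})) * expectation (\<lambda>\<omega>. h (eps k \<omega>))"
    unfolding eq by (rule indep_prod[where Bg=1 and Bh=1]) (auto simp: G_def h_def h_bdd)
  also have "expectation (\<lambda>\<omega>. h (eps k \<omega>)) = 0"
    unfolding h_def by (rule h_mean) (use w m2 words_nth in auto)
  finally show ?thesis by simp
qed

lemma orth:
  assumes w: "w \<in> words R m" and w': "w' \<in> words R m" and ii: "i < i'"
  shows "expectation (\<lambda>\<omega>. phi R m w (\<lambda>j. bit_sel p r (eps (i+j) \<omega>))
                          * phi R m w' (\<lambda>j. bit_sel p r (eps (i'+j) \<omega>))) = 0"
proof -
  define k where "k = i' + (m-1)"
  define G where "G y = phi R m w (\<lambda>j. bit_sel p r (y (i+j))) *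
        (of_bool (\<forall>j<m-1. bit_sel p r (y (i'+j)) = w'!j) :: real)" for y :: "nat \<Rightarrow> real"
  define h where "h x = of_bool (bit_sel p r x = w'!(m-1)) - 1/real R" for x
  have eq0: "phi R m w (\<lambda>j. bit_sel p r (restrict (\<lambda>j. eps j \<omega>) {..<k} (i+j)))
       = phi R m w (\<lambda>j. bit_sel p r (eps (i+j) \<omega>))" for \<omega>
    by (rule phi_cong) (use ii m2 in \<open>auto simp: k_def\<close>)
  have eq: "phi R m w (\<lambda>j. bit_sel p r (eps (i+j) \<omega>)) * phi R m w' (\<lambda>j. bit_sel p r (eps (i'+j) \<omega>))
     = G (restrict (\<lambda>j. eps j \<omega>) {..<k}) * h (eps k \<omega>)" for \<omega>
    unfolding G_def eq0 unfolding phi_def h_def k_def using m2 by auto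
  have Gm: "G \<in> borel_measurable (PiM {..<k} (\<lambda>_. borel))"
    unfolding G_def phi_def by measurable
  have Gb: "\<bar>G y\<bar> \<le> 1" for y
    unfolding G_def using phi_abs[of R m w] R2 by (auto simp: abs_mult)
  have "expectation (\<lambda>\<omega>. phi R m w (\<lambda>j. bit_sel p r (eps (i+j) \<omega>))
                          * phi R m w' (\<lambda>j. bit_sel p r (eps (i'+j) \<omega>)))
      = expectation (\<lambda>\<omega>. G (restrict (\<lambda>j. eps j \<omega>) {..<k})) * expectation (\<lambda>\<omega>. h (eps k \<omega>))"
    unfolding eq by (rule indep_prod[where Bg=1 and Bh=1]) (use Gm Gb in \<open>auto simp: h_def h_bdd\<close>)
  also have "expectation (\<lambda>\<omega>. h (eps k \<omega>)) = 0"
    unfolding h_def by (rule h_mean) (use w' m2 words_nth in auto)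
  finally show ?thesis by simp
qed

lemma pre_prob:
  "(\<forall>j<n. a j < R) \<Longrightarrow> expectation (\<lambda>\<omega>. of_bool (\<forall>j<n. bit_sel p r (eps j \<omega>) = a j)) = (1 / real R)^n"
proof (induction n)
  case 0 then show ?case by (simp add: prob_space)
next
  case (Suc n)
  define G where "G y = (of_bool (\<forall>j<n. bit_sel p r (y j) = a j) :: real)" for y :: "nat \<Rightarrow> real"
  define h where "h x = (of_bool (bit_sel p r x = a n) :: real)" for x
  have eq: "(of_bool (\<forall>j<Suc n. bit_sel p r (eps j \<omega>) = a j) :: real) = G (restrict (\<lambda>j. eps j \<omega>) {..<n}) * h (eps n \<omega>)" for \<omega>
    unfolding G_def h_def by (auto simp: less_Suc_eq)
  have eqG: "G (restrict (\<lambda>j. eps j \<omega>) {..<n}) = of_bool (\<forall>j<n. bit_sel p r (eps j \<omega>) = a j)" for \<omega>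
    unfolding G_def by auto
  have "expectation (\<lambda>\<omega>. of_bool (\<forall>j<Suc n. bit_sel p r (eps j \<omega>) = a j) :: real)
     = expectation (\<lambda>\<omega>. G (restrict (\<lambda>j. eps j \<omega>) {..<n})) * expectation (\<lambda>\<omega>. h (eps n \<omega>))"
    unfolding eq by (rule indep_prod[where Bg=1 and Bh=1]) (auto simp: G_def h_def)
  also have "expectation (\<lambda>\<omega>. h (eps n \<omega>)) = 1 / real R"
    unfolding h_def using exp_ind[of "\<lambda>\<omega>. bit_sel p r (eps n \<omega>) = a n"] code_prob[of "a n" n] Suc.prems by simp
  finally show ?case unfolding eqG using Suc by simp
qed

lemma sq_pos:
  assumes w: "w \<in> words R m"
  shows "expectation (\<lambda>\<omega>. (phi R m w (\<lambda>j. bit_sel p r (eps (0+j) \<omega>)))\<^sup>2) > 0"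
proof -
  define k where "k = m-1"
  define G where "G y = (of_bool (\<forall>j<m-1. bit_sel p r (y j) = w!j) :: real)" for y :: "nat \<Rightarrow> real"
  define h where "h x = (of_bool (bit_sel p r x = w!(m-1)) - 1/real R)\<^sup>2" for x
  have eq: "(phi R m w (\<lambda>j. bit_sel p r (eps (0+j) \<omega>)))\<^sup>2 = G (restrict (\<lambda>j. eps j \<omega>) {..<k}) * h (eps k \<omega>)" for \<omega>
  proof -
    have pe: "(\<forall>j<m-1. bit_sel p r (restrict (\<lambda>j. eps j \<omega>) {..<k} j) = w!j) = (\<forall>j<m-1. bit_sel p r (eps j \<omega>) = w!j)"
      unfolding k_def by auto
    show ?thesis unfolding phi_def G_def h_def pe power_mult_distrib by (simp add: k_def)
  qed
  have hm: "h \<in> borel_measurable borel" unfolding h_def by measurable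
  have hb: "\<bar>h x\<bar> \<le> 1" for x
  proof -
    have "\<bar>of_bool (bit_sel p r x = w!(m-1)) - 1/real R\<bar> \<le> 1" by (rule h_bdd)
    then show ?thesis unfolding h_def by (simp only: abs_square_le_1 abs_power2)
  qed
  have "expectation (\<lambda>\<omega>. (phi R m w (\<lambda>j. bit_sel p r (eps (0+j) \<omega>)))\<^sup>2)
     = expectation (\<lambda>\<omega>. G (restrict (\<lambda>j. eps j \<omega>) {..<k})) * expectation (\<lambda>\<omega>. h (eps k \<omega>))"
    unfolding eq by (rule indep_prod[where Bg=1 and Bh=1]) (use hb hm in \<open>auto simp: G_def\<close>)
  also have "expectation (\<lambda>\<omega>. G (restrict (\<lambda>j. eps j \<omega>) {..<k})) = (1 / real R)^(m-1)"
  proof -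
    have "expectation (\<lambda>\<omega>. G (restrict (\<lambda>j. eps j \<omega>) {..<k})) =
        expectation (\<lambda>\<omega>. of_bool (\<forall>j<m-1. bit_sel p r (eps j \<omega>) = w!j))"
      unfolding G_def k_def by (rule Bochner_Integration.integral_cong) auto
    also have "\<dots> = (1 / real R)^(m-1)"
      by (rule pre_prob) (use w words_nth in auto)
    finally show ?thesis .
  qed
  also have "expectation (\<lambda>\<omega>. h (eps k \<omega>)) = 1 / real R * (1 - 2 / real R) + 1 / (real R)^2"
  proof -
    have "h x = of_bool (bit_sel p r x = w!(m-1)) * (1 - 2 / real R) + 1 / (real R)^2" for x
      unfolding h_def by (cases "bit_sel p r x = w!(m-1)") (simp_all add: power2_eq_square algebra_simps)
    then have "expectation (\<lambda>\<omega>. h (eps k \<omega>)) =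
        expectation (\<lambda>\<omega>. of_bool (bit_sel p r (eps k \<omega>) = w!(m-1)) * (1 - 2 / real R) + 1 / (real R)^2)"
      by simp
    also have "\<dots> = expectation (\<lambda>\<omega>. of_bool (bit_sel p r (eps k \<omega>) = w!(m-1))) * (1 - 2 / real R) + 1 / (real R)^2"
      by (subst Bochner_Integration.integral_add) (auto intro!: integrable_bdd[where B=1] simp: prob_space)
    also have "expectation (\<lambda>\<omega>. of_bool (bit_sel p r (eps k \<omega>) = w!(m-1))) = 1 / real R"
      using exp_ind[of "\<lambda>\<omega>. bit_sel p r (eps k \<omega>) = w!(m-1)"] code_prob[of "w!(m-1)" k] w words_nth m2 by simp
    finally show ?thesis .
  qed
  finally have e: "expectation (\<lambda>\<omega>. (phi R m w (\<lambda>j. bit_sel p r (eps (0+j) \<omega>)))\<^sup>2)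
     = (1 / real R)^(m-1) * (1 / real R * (1 - 2 / real R) + 1 / (real R)^2)" .
  have "1 / real R * (1 - 2 / real R) + 1 / (real R)^2 = (real R - 1) / (real R)^2"
    using R2 by (simp add: field_simps power2_eq_square)
  moreover have "(real R - 1) / (real R)^2 > 0" using R2 by simp
  ultimately show ?thesis unfolding e using R2 by simp
qed

end



lemma words_finite: "finite (words R d)"
proof -
  have "words R d = {xs. set xs \<subseteq> {..<R} \<and> length xs = d}" unfolding words_def by auto
  then show ?thesis using finite_lists_length_eq[of "{..<R}" d] by simp
qed

lemma words_snoc:
  assumes "d \<ge> 1"
  shows "words R d = (\<lambda>(u,a). u @ [a]) ` (words R (d-1) \<times> {..<R})"
proof (intro set_eqI iffI)
  fix w assume w: "w \<in> words R d"
  then have "w \<noteq> []" using assms unfolding words_def by auto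
  then have "w = butlast w @ [last w]" by simp
  moreover have "butlast w \<in> words R (d-1)" using w unfolding words_def
    by (auto dest: in_set_butlastD)
  moreover have "last w \<in> set w" using \<open>w \<noteq> []\<close> by simp
  then have "last w < R" using w unfolding words_def by auto
  ultimately show "w \<in> (\<lambda>(u,a). u @ [a]) ` (words R (d-1) \<times> {..<R})"
    by (intro image_eqI[where x="(butlast w, last w)"]) auto
next
  fix w assume "w \<in> (\<lambda>(u,a). u @ [a]) ` (words R (d-1) \<times> {..<R})"
  then show "w \<in> words R d" using assms unfolding words_def by auto
qed

lemma sum_words:
  assumes "d \<ge> 1"
  shows "(\<Sum>w\<in>words R d. g w) = (\<Sum>u\<in>words R (d-1). \<Sum>a<R. g (u @ [a]))"
proof -
  have inj: "inj_on (\<lambda>(u,a). u @ [a]) (words R (d-1) \<times> {..<R})"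
    by (auto simp: inj_on_def)
  have "(\<Sum>w\<in>words R d. g w) = (\<Sum>x\<in>words R (d-1) \<times> {..<R}. g ((\<lambda>(u,a). u @ [a]) x))"
    unfolding words_snoc[OF assms] by (subst sum.reindex[OF inj]) (simp add: comp_def)
  also have "\<dots> = (\<Sum>u\<in>words R (d-1). \<Sum>a<R. g (u @ [a]))"
    by (simp add: sum.cartesian_product split_def)
  finally show ?thesis .
qed

lemma card_as_sum: "real (card {i. i < (n::nat) \<and> P i}) = (\<Sum>i<n. of_bool (P i))"
proof -
  have "{i. i < n \<and> P i} = {..<n} \<inter> {i. P i}" by auto
  moreover have "(\<Sum>i<n. of_bool (P i)) = real (card ({..<n} \<inter> {i. P i}))"
    using sum_of_bool_eq[of "{..<n}" P] by simp
  ultimately show ?thesis by simp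
qed

lemma sq_algebra:
  fixes x :: "nat \<Rightarrow> real" and c :: real
  assumes R: "R \<ge> 1"
  shows "(\<Sum>a<R. (x a - c)\<^sup>2) - (1 / real R) * ((\<Sum>a<R. x a) - real R * c)\<^sup>2
       = (\<Sum>a<R. (x a - (\<Sum>b<R. x b) / real R)\<^sup>2)"
proof -
  define S where "S = (\<Sum>a<R. x a)"
  have Rp: "real R > 0" using R by simp
  have gen: "(\<Sum>a<R. (x a - t)\<^sup>2) = (\<Sum>a<R. (x a)\<^sup>2) - 2 * t * S + real R * t\<^sup>2" for t
  proof -
    have "(\<Sum>a<R. (x a - t)\<^sup>2) = (\<Sum>a<R. (x a)\<^sup>2 - 2 * t * x a + t\<^sup>2)"
      by (simp add: power2_diff algebra_simps)
    also have "\<dots> = (\<Sum>a<R. (x a)\<^sup>2) - (\<Sum>a<R. 2 * t * x a) + (\<Sum>a<R. t\<^sup>2)"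
      by (simp add: sum.distrib sum_subtractf)
    also have "(\<Sum>a<R. 2 * t * x a) = 2 * t * S" by (simp add: S_def sum_distrib_left)
    finally show ?thesis by simp
  qed
  note l = gen[of c]
  note r = gen[of "S / real R"]
  show ?thesis unfolding S_def[symmetric] l r using Rp
    by (simp add: field_simps power2_eq_square)
qed

declare sum_of_bool_eq[simp del]

definition csum :: "nat \<Rightarrow> nat \<Rightarrow> (nat \<Rightarrow> 'a \<Rightarrow> nat) \<Rightarrow> nat \<Rightarrow> nat list \<Rightarrow> 'a \<Rightarrow> real" where
  "csum R m kap n w \<omega> = (\<Sum>i<n. phi R m w (\<lambda>j. kap ((i+j) mod n) \<omega>))"

lemma cyc_real: "real (cyc_count kap n w \<omega>) = (\<Sum>i<n. of_bool (\<forall>j<length w. kap ((i+j) mod n) \<omega> = w!j))"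
  unfolding cyc_count_def by (rule card_as_sum)

lemma snoc_cond:
  "(\<forall>j<length (u@[a]). f j = (u@[a])!j) \<longleftrightarrow> (\<forall>j<length u. f j = u!j) \<and> f (length u) = a"
proof
  assume h: "\<forall>j<length (u@[a]). f j = (u@[a])!j"
  have "\<forall>j<length u. f j = u!j"
  proof (intro allI impI)
    fix j assume "j < length u"
    then show "f j = u!j" using h[rule_format, of j] by (simp add: nth_append)
  qed
  moreover have "f (length u) = a" using h[rule_format, of "length u"] by simp
  ultimately show "(\<forall>j<length u. f j = u!j) \<and> f (length u) = a" by blast
next
  assume h: "(\<forall>j<length u. f j = u!j) \<and> f (length u) = a"
  show "\<forall>j<length (u@[a]). f j = (u@[a])!j"
  proof (intro allI impI)
    fix j assume "j < length (u@[a])"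
    then have "j < length u \<or> j = length u" by auto
    then show "f j = (u@[a])!j" using h by (auto simp: nth_append)
  qed
qed

lemma sum_delta_bool: "(x::nat) < R \<Longrightarrow> (\<Sum>a<R. of_bool (x = a) :: real) = 1"
  by (simp add: sum_of_bool_eq)

lemma cyc_split:
  assumes kapR: "\<forall>i \<omega>. kap i \<omega> < R"
  shows "real (cyc_count kap n u \<omega>) = (\<Sum>a<R. real (cyc_count kap n (u@[a]) \<omega>))"
proof -
  have "(\<Sum>a<R. real (cyc_count kap n (u@[a]) \<omega>))
      = (\<Sum>a<R. \<Sum>i<n. of_bool ((\<forall>j<length u. kap ((i+j) mod n) \<omega> = u!j) \<and> kap ((i + length u) mod n) \<omega> = a))"
    unfolding cyc_real snoc_cond[where f="\<lambda>j. kap ((_+j) mod n) \<omega>"] by simp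
  also have "\<dots> = (\<Sum>i<n. \<Sum>a<R. of_bool (\<forall>j<length u. kap ((i+j) mod n) \<omega> = u!j) * of_bool (kap ((i + length u) mod n) \<omega> = a))"
    by (subst sum.swap) (simp only: of_bool_conj)
  also have "\<dots> = (\<Sum>i<n. of_bool (\<forall>j<length u. kap ((i+j) mod n) \<omega> = u!j))"
  proof (intro sum.cong refl)
    fix i
    have "(\<Sum>a<R. of_bool (\<forall>j<length u. kap ((i+j) mod n) \<omega> = u!j) * of_bool (kap ((i + length u) mod n) \<omega> = a))
      = (of_bool (\<forall>j<length u. kap ((i+j) mod n) \<omega> = u!j) :: real) * (\<Sum>a<R. of_bool (kap ((i + length u) mod n) \<omega> = a))"
      by (simp only: sum_distrib_left)
    also have "\<dots> = of_bool (\<forall>j<length u. kap ((i+j) mod n) \<omega> = u!j)"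
      using sum_delta_bool[of "kap ((i + length u) mod n) \<omega>" R] kapR by simp
    finally show "(\<Sum>a<R. of_bool (\<forall>j<length u. kap ((i+j) mod n) \<omega> = u!j) * of_bool (kap ((i + length u) mod n) \<omega> = a))
      = (of_bool (\<forall>j<length u. kap ((i+j) mod n) \<omega> = u!j) :: real)" .
  qed
  finally show ?thesis unfolding cyc_real by simp
qed

lemma csum_snoc:
  assumes len: "length u = m - 1" and m2: "m \<ge> 2"
  shows "csum R m kap n (u@[a]) \<omega> = real (cyc_count kap n (u@[a]) \<omega>) - real (cyc_count kap n u \<omega>) / real R"
proof -
  have ph: "phi R m (u@[a]) \<kappa> = of_bool (\<forall>j<length u. \<kappa> j = u!j) * of_bool (\<kappa> (length u) = a)
       - of_bool (\<forall>j<length u. \<kappa> j = u!j) / real R" for \<kappa>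
  proof -
    have "(\<forall>j<m-1. \<kappa> j = (u@[a])!j) = (\<forall>j<length u. \<kappa> j = u!j)"
      using len by (auto simp: nth_append)
    moreover have "(u@[a])!(m-1) = a" using len by (metis nth_append_length)
    ultimately show ?thesis unfolding phi_def using len by (simp add: algebra_simps)
  qed
  show ?thesis
    unfolding csum_def ph cyc_real snoc_cond[where f="\<lambda>j. kap ((_+j) mod n) \<omega>"]
    by (simp only: of_bool_conj sum_subtractf sum_divide_distrib)
qed

lemma TSO_eq:
  assumes m2: "m \<ge> 2" and R1: "R \<ge> 1" and kapR: "\<forall>i \<omega>. kap i \<omega> < R"
  shows "T_SO kap R m n \<omega> = real R ^ m / real n * (\<Sum>w\<in>words R m. (csum R m kap n w \<omega>)\<^sup>2)"
proof -
  define c where "c = real n / real R ^ m"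
  define x where "x u a = real (cyc_count kap n (u@[a]) \<omega>)" for u a
  define X where "X u = real (cyc_count kap n u \<omega>)" for u
  have Rp: "real R > 0" using R1 by simp
  have pm: "real R ^ m = real R * real R ^ (m-1)" using m2
    by (metis Suc_diff_le le_trans one_le_numeral power_Suc diff_Suc_1 Suc_1 Suc_le_lessD less_imp_le_nat)
  have c2: "real n / real R ^ (m-1) = real R * c" unfolding c_def pm using Rp by (simp add: field_simps)
  have c3: "real R ^ (m-1) / real n = real R ^ m / real n * (1 / real R)" unfolding pm using Rp by (simp add: field_simps)
  have XS: "X u = (\<Sum>a<R. x u a)" for u unfolding X_def x_def by (rule cyc_split[OF kapR])
  have s1: "(\<Sum>w\<in>words R m. (real (cyc_count kap n w \<omega>) - c)\<^sup>2) = (\<Sum>u\<in>words R (m-1). \<Sum>a<R. (x u a - c)\<^sup>2)"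
    unfolding x_def using m2 by (subst sum_words) auto
  have s2: "(\<Sum>u\<in>words R (m-1). (real (cyc_count kap n u \<omega>) - real n / real R ^ (m-1))\<^sup>2)
      = (\<Sum>u\<in>words R (m-1). ((\<Sum>a<R. x u a) - real R * c)\<^sup>2)"
    unfolding c2 XS[unfolded X_def] ..
  have s3: "(\<Sum>w\<in>words R m. (csum R m kap n w \<omega>)\<^sup>2) = (\<Sum>u\<in>words R (m-1). \<Sum>a<R. (x u a - (\<Sum>b<R. x u b) / real R)\<^sup>2)"
  proof -
    have "(\<Sum>w\<in>words R m. (csum R m kap n w \<omega>)\<^sup>2) = (\<Sum>u\<in>words R (m-1). \<Sum>a<R. (csum R m kap n (u@[a]) \<omega>)\<^sup>2)"
      using m2 by (subst sum_words) auto
    also have "\<dots> = (\<Sum>u\<in>words R (m-1). \<Sum>a<R. (x u a - (\<Sum>b<R. x u b) / real R)\<^sup>2)"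
    proof (intro sum.cong refl)
      fix u a assume "u \<in> words R (m-1)"
      then have "length u = m - 1" unfolding words_def by simp
      then show "(csum R m kap n (u@[a]) \<omega>)\<^sup>2 = (x u a - (\<Sum>b<R. x u b) / real R)\<^sup>2"
        using csum_snoc[OF _ m2, of u R kap n a \<omega>] XS[unfolded X_def, of u] unfolding x_def by simp
    qed
    finally show ?thesis .
  qed
  have "T_SO kap R m n \<omega> = real R ^ m / real n * (\<Sum>u\<in>words R (m-1). \<Sum>a<R. (x u a - c)\<^sup>2)
       - real R ^ m / real n * (1 / real R) * (\<Sum>u\<in>words R (m-1). ((\<Sum>a<R. x u a) - real R * c)\<^sup>2)"
    unfolding T_SO_def s1[unfolded c_def] s2[unfolded c_def] c3 c_def by simp
  also have "\<dots> = real R ^ m / real n * (\<Sum>u\<in>words R (m-1).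
        ((\<Sum>a<R. (x u a - c)\<^sup>2) - (1 / real R) * ((\<Sum>a<R. x u a) - real R * c)\<^sup>2))"
    by (simp add: sum_subtractf sum_distrib_left algebra_simps)
  also have "\<dots> = real R ^ m / real n * (\<Sum>u\<in>words R (m-1). \<Sum>a<R. (x u a - (\<Sum>b<R. x u b) / real R)\<^sup>2)"
    using sq_algebra[OF R1] by simp
  finally show ?thesis unfolding s3 .
qed




lemma sq_diff_bound:
  fixes C D K n N :: real
  assumes CD: "\<bar>C - D\<bar> \<le> K" and K: "0 \<le> K" and N: "0 < N" and Nn: "N \<le> n" and nN: "n - N = K"
  shows "\<bar>C\<^sup>2/n - D\<^sup>2/N\<bar> \<le> K\<^sup>2/n + K/sqrt n + D\<^sup>2 * (K/(n * sqrt n) + K/(n*N))"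
proof -
  have n: "0 < n" using N Nn by simp
  have sn: "0 < sqrt n" using n by simp
  have "1/N - 1/n = (n - N)/(n*N)" using n N by (simp add: field_simps)
  then have "1/N - 1/n = K/(n*N)" unfolding nN .
  then have iN: "1/N = 1/n + K/(n*N)" by linarith
  have e1: "C\<^sup>2/n - D\<^sup>2/N = (C\<^sup>2 - D\<^sup>2)/n - D\<^sup>2 * (K/(n*N))"
  proof -
    have "D\<^sup>2/N = D\<^sup>2 * (1/N)" by simp
    also have "\<dots> = D\<^sup>2/n + D\<^sup>2 * (K/(n*N))" unfolding iN by (simp add: algebra_simps)
    finally show ?thesis by (simp add: diff_divide_distrib)
  qed
  have "\<bar>C\<^sup>2 - D\<^sup>2\<bar> = \<bar>C - D\<bar> * \<bar>C + D\<bar>"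
    by (simp add: power2_eq_square abs_mult[symmetric] algebra_simps)
  also have "\<dots> \<le> K * (K + 2 * \<bar>D\<bar>)"
  proof (rule mult_mono[OF CD])
    show "\<bar>C + D\<bar> \<le> K + 2 * \<bar>D\<bar>" using CD by linarith
  qed (use K in auto)
  finally have a1: "\<bar>C\<^sup>2 - D\<^sup>2\<bar> \<le> K * (K + 2 * \<bar>D\<bar>)" .
  have "0 \<le> (sqrt n - \<bar>D\<bar>)\<^sup>2" by simp
  then have "2 * sqrt n * \<bar>D\<bar> \<le> n + D\<^sup>2"
    using n by (simp add: power2_diff)
  then have a2: "2 * \<bar>D\<bar> \<le> sqrt n + D\<^sup>2 / sqrt n"
    using sn n by (simp add: field_simps)
  have "K * (K + 2 * \<bar>D\<bar>) \<le> K * (K + (sqrt n + D\<^sup>2 / sqrt n))"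
    using a2 K by (intro mult_left_mono) auto
  with a1 have a3: "\<bar>C\<^sup>2 - D\<^sup>2\<bar> / n \<le> K * (K + (sqrt n + D\<^sup>2 / sqrt n)) / n"
    using n by (simp add: divide_right_mono)
  have a4: "K * (K + (sqrt n + D\<^sup>2 / sqrt n)) / n = K\<^sup>2/n + K/sqrt n + D\<^sup>2 * (K/(n * sqrt n))"
    using sn n by (simp add: field_simps power2_eq_square)
  have "\<bar>C\<^sup>2/n - D\<^sup>2/N\<bar> \<le> \<bar>C\<^sup>2 - D\<^sup>2\<bar>/n + D\<^sup>2 * (K/(n*N))"
  proof -
    have t1: "\<bar>(C\<^sup>2-D\<^sup>2)/n\<bar> = \<bar>C\<^sup>2-D\<^sup>2\<bar>/n" using n by (simp add: abs_divide)
    have t2: "0 \<le> D\<^sup>2 * (K/(n*N))" using n N K by simp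
    have "\<bar>(C\<^sup>2-D\<^sup>2)/n - D\<^sup>2*(K/(n*N))\<bar> \<le> \<bar>(C\<^sup>2-D\<^sup>2)/n\<bar> + \<bar>D\<^sup>2*(K/(n*N))\<bar>"
      by (rule abs_triangle_ineq4)
    moreover have t3: "\<bar>D\<^sup>2*(K/(n*N))\<bar> = D\<^sup>2*(K/(n*N))" using t2 by (rule abs_of_nonneg)
    ultimately show ?thesis unfolding e1 t1[symmetric] by (simp only: t3)
  qed
  then show ?thesis using a3 a4 by (simp add: algebra_simps)
qed

context lsetup
begin

definition Fv :: "nat list \<Rightarrow> nat \<Rightarrow> 'a \<Rightarrow> real" where
  "Fv w i \<omega> = phi R m w (\<lambda>j. bit_sel p r (eps (i+j) \<omega>))"

definition Dv :: "nat list \<Rightarrow> nat \<Rightarrow> 'a \<Rightarrow> real" where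
  "Dv w N \<omega> = (\<Sum>i<N. Fv w i \<omega>)"

lemma Fv_meas[measurable]: "Fv w i \<in> borel_measurable M"
  unfolding Fv_def phi_def by measurable

lemma Fv_abs: "\<bar>Fv w i \<omega>\<bar> \<le> 1"
  unfolding Fv_def by (rule phi_abs) (use R2 in simp)

lemma Fv_sq_bd: "Fv w i \<omega> * Fv w i \<omega> \<le> 1"
proof -
  have "\<bar>Fv w i \<omega>\<bar> * \<bar>Fv w i \<omega>\<bar> \<le> 1" by (rule mult_le_one) (auto simp: Fv_abs)
  then show ?thesis by (simp add: abs_mult_self_eq)
qed

lemma Fv_int: "integrable M (\<lambda>\<omega>. Fv w i \<omega> * Fv w' j \<omega>)"
  by (rule integrable_bdd[where B=1]) (auto simp: abs_mult intro: mult_le_one Fv_abs)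

lemma Fv_int1: "integrable M (Fv w i)"
  by (rule integrable_bdd[where B=1]) (auto intro: Fv_abs)

lemma Fv_mean: "w \<in> words R m \<Longrightarrow> expectation (Fv w i) = 0"
  unfolding Fv_def by (rule mean0)

lemma Fv_orth: "w \<in> words R m \<Longrightarrow> i \<noteq> j \<Longrightarrow> expectation (\<lambda>\<omega>. Fv w i \<omega> * Fv w j \<omega>) = 0"
proof -
  assume w: "w \<in> words R m" and ij: "i \<noteq> j"
  show ?thesis
  proof (cases "i < j")
    case True then show ?thesis unfolding Fv_def by (rule orth[OF w w])
  next
    case False
    then have "j < i" using ij by simp
    then have "expectation (\<lambda>\<omega>. Fv w j \<omega> * Fv w i \<omega>) = 0" unfolding Fv_def by (rule orth[OF w w])
    then show ?thesis by (simp add: mult.commute)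
  qed
qed

lemma Fv_sq_le: "expectation (\<lambda>\<omega>. Fv w i \<omega> * Fv w i \<omega>) \<le> 1"
proof -
  have "expectation (\<lambda>\<omega>. Fv w i \<omega> * Fv w i \<omega>) \<le> expectation (\<lambda>\<omega>. 1)"
    by (rule integral_mono[OF Fv_int]) (auto simp: Fv_sq_bd)
  then show ?thesis by (simp add: prob_space)
qed

lemma Dv_meas[measurable]: "Dv w N \<in> borel_measurable M"
  unfolding Dv_def by measurable

lemma Dv_sq_int: "integrable M (\<lambda>\<omega>. (Dv w N \<omega>)\<^sup>2)"
proof (rule integrable_bdd[where B="(real N)\<^sup>2"])
  show "(\<lambda>\<omega>. (Dv w N \<omega>)\<^sup>2) \<in> borel_measurable M" by measurable
  show "\<forall>\<omega>. \<bar>(Dv w N \<omega>)\<^sup>2\<bar> \<le> (real N)\<^sup>2"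
  proof
    fix \<omega>
    have "\<bar>Dv w N \<omega>\<bar> \<le> (\<Sum>i<N. \<bar>Fv w i \<omega>\<bar>)" unfolding Dv_def by (rule sum_abs)
    also have "\<dots> \<le> (\<Sum>i<N. 1)" by (intro sum_mono Fv_abs)
    finally have "\<bar>Dv w N \<omega>\<bar> \<le> real N" by simp
    then have "\<bar>Dv w N \<omega>\<bar>^2 \<le> (real N)^2" by (rule power_mono) simp
    then show "\<bar>(Dv w N \<omega>)\<^sup>2\<bar> \<le> (real N)\<^sup>2" by simp
  qed
qed

lemma Dv_sq_exp:
  assumes w: "w \<in> words R m"
  shows "expectation (\<lambda>\<omega>. (Dv w N \<omega>)\<^sup>2) \<le> real N"
proof -
  have "(\<lambda>\<omega>. (Dv w N \<omega>)\<^sup>2) = (\<lambda>\<omega>. \<Sum>i<N. \<Sum>j<N. Fv w i \<omega> * Fv w j \<omega>)"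
    unfolding Dv_def power2_eq_square by (simp add: sum_product)
  then have "expectation (\<lambda>\<omega>. (Dv w N \<omega>)\<^sup>2) = (\<Sum>i<N. \<Sum>j<N. expectation (\<lambda>\<omega>. Fv w i \<omega> * Fv w j \<omega>))"
    by (simp add: Bochner_Integration.integral_sum Fv_int)
  also have "\<dots> = (\<Sum>i<N. expectation (\<lambda>\<omega>. Fv w i \<omega> * Fv w i \<omega>))"
  proof (intro sum.cong refl)
    fix i assume i: "i \<in> {..<N}"
    have "(\<Sum>j<N. expectation (\<lambda>\<omega>. Fv w i \<omega> * Fv w j \<omega>))
        = (\<Sum>j<N. if i = j then expectation (\<lambda>\<omega>. Fv w i \<omega> * Fv w i \<omega>) else 0)"
      by (intro sum.cong refl) (auto simp: Fv_orth[OF w])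
    also have "\<dots> = expectation (\<lambda>\<omega>. Fv w i \<omega> * Fv w i \<omega>)"
      using i by (simp add: sum.delta)
    finally show "(\<Sum>j<N. expectation (\<lambda>\<omega>. Fv w i \<omega> * Fv w j \<omega>)) = expectation (\<lambda>\<omega>. Fv w i \<omega> * Fv w i \<omega>)" .
  qed
  also have "\<dots> \<le> (\<Sum>i<N. 1)" by (intro sum_mono Fv_sq_le)
  finally show ?thesis by simp
qed

lemma window_Fv: "window eps m (fw w) i = Fv w i"
  by (auto simp: fun_eq_iff window_fw Fv_def)

lemma sigma_eq:
  assumes w: "w \<in> words R m"
  shows "sum_sigma2 M eps m (fw w) = expectation (\<lambda>\<omega>. Fv w 0 \<omega> * Fv w 0 \<omega>)"
proof -
  have cv: "covar M (Fv w i) (Fv w 0) = expectation (\<lambda>\<omega>. Fv w i \<omega> * Fv w 0 \<omega>)" for i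
    unfolding covar_def using Fv_mean[OF w] by simp
  have "(\<Sum>i\<in>{1..<m}. covar M (Fv w i) (Fv w 0)) = 0"
    unfolding cv by (intro sum.neutral) (auto simp: Fv_orth[OF w])
  then show ?thesis unfolding sum_sigma2_def window_Fv cv by simp
qed

lemma sigma_pos:
  assumes w: "w \<in> words R m"
  shows "sum_sigma2 M eps m (fw w) > 0"
  using sq_pos[OF w] unfolding sigma_eq[OF w] Fv_def by (simp add: power2_eq_square)

lemma sum_E0: "w \<in> words R m \<Longrightarrow> sum_E M eps m (fw w) = 0"
  unfolding sum_E_def window_Fv by (rule Fv_mean)

lemma valid: "w \<in> words R m \<Longrightarrow> valid_summing M eps m (fw w)"
  unfolding valid_summing_def window_Fv using m2 sigma_pos Fv_int1
  by (auto intro!: integrable_bdd[where B=1] simp: Fv_sq_bd power2_eq_square)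

lemma sum_stat_eq:
  assumes w: "w \<in> words R m"
  shows "sum_stat M eps m (fw w) n \<omega> = Dv w (n + 1 - m) \<omega> / (sqrt (sum_sigma2 M eps m (fw w)) * sqrt (real (n + 1 - m)))"
  unfolding sum_stat_def sum_E0[OF w] window_Fv Dv_def by simp

lemma cyc_lin:
  assumes n: "n \<ge> m"
  shows "\<bar>csum R m (\<lambda>i \<omega>. bit_sel p r (eps i \<omega>)) n w \<omega> - Dv w (n+1-m) \<omega>\<bar> \<le> real (m-1)"
proof -
  define N where "N = n + 1 - m"
  define f where "f i = phi R m w (\<lambda>j. bit_sel p r (eps ((i+j) mod n) \<omega>))" for i
  have Nn: "N \<le> n" using m2 n unfolding N_def by simp
  have sp: "{..<n} = {..<N} \<union> {N..<n}" using Nn by auto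
  have "csum R m (\<lambda>i \<omega>. bit_sel p r (eps i \<omega>)) n w \<omega> = (\<Sum>i<n. f i)"
    unfolding csum_def f_def ..
  also have "\<dots> = (\<Sum>i<N. f i) + (\<Sum>i\<in>{N..<n}. f i)"
    unfolding sp by (rule sum.union_disjoint) auto
  also have "(\<Sum>i<N. f i) = Dv w N \<omega>"
    unfolding Dv_def
  proof (intro sum.cong refl)
    fix i assume i: "i \<in> {..<N}"
    show "f i = Fv w i \<omega>" unfolding f_def Fv_def
    proof (rule phi_cong)
      fix j assume j: "j < m"
      have "i + j < n" using i j n m2 unfolding N_def by auto
      then show "bit_sel p r (eps ((i + j) mod n) \<omega>) = bit_sel p r (eps (i + j) \<omega>)" by simp
    qed (use m2 in simp)
  qed
  finally have "csum R m (\<lambda>i \<omega>. bit_sel p r (eps i \<omega>)) n w \<omega> - Dv w N \<omega> = (\<Sum>i\<in>{N..<n}. f i)" by simp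
  moreover have "\<bar>\<Sum>i\<in>{N..<n}. f i\<bar> \<le> real (m-1)"
  proof -
    have "\<bar>\<Sum>i\<in>{N..<n}. f i\<bar> \<le> (\<Sum>i\<in>{N..<n}. \<bar>f i\<bar>)" by (rule sum_abs)
    also have "\<dots> \<le> (\<Sum>i\<in>{N..<n}. 1)" unfolding f_def by (intro sum_mono phi_abs) (use R2 in simp)
    also have "\<dots> = real (m-1)" using n m2 unfolding N_def by simp
    finally show ?thesis .
  qed
  ultimately show ?thesis unfolding N_def by simp
qed

end



lemma lim_aux:
  fixes c1 c2 :: real
  shows "(\<lambda>n. c1 * (1 / real n) + c2 * (1 / sqrt (real n))) \<longlonglongrightarrow> 0"
proof -
  have L1: "(\<lambda>n. 1 / real n) \<longlonglongrightarrow> 0" by (rule lim_1_over_n)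
  have "(\<lambda>n. sqrt (1 / real n)) \<longlonglongrightarrow> sqrt 0" by (rule tendsto_real_sqrt[OF L1])
  then have L2: "(\<lambda>n. 1 / sqrt (real n)) \<longlonglongrightarrow> 0" by (simp add: real_sqrt_divide)
  have "(\<lambda>n. c1 * (1 / real n) + c2 * (1 / sqrt (real n))) \<longlonglongrightarrow> c1 * 0 + c2 * 0"
    by (intro tendsto_add tendsto_mult tendsto_const L1 L2)
  then show ?thesis by simp
qed

context lsetup
begin

lemma main:
  "\<exists>(\<tau>::nat) (Q::nat) (d::nat \<Rightarrow> nat \<Rightarrow> real) (ms::nat \<Rightarrow> nat)
            (fs::nat \<Rightarrow> (nat \<Rightarrow> real) \<Rightarrow> real).
           \<tau> \<ge> 1 \<and> Q \<ge> 1 \<and> (\<forall>q<Q. valid_summing M eps (ms q) (fs q)) \<and>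
           conv_prob_zero M (\<lambda>n \<omega>. T_SO (\<lambda>i \<omega>. bit_sel p r (eps i \<omega>)) (2 ^ r) m n \<omega>
                                    - T_quad M eps \<tau> Q d ms fs n \<omega>)"
proof -
  define W where "W = words R m"
  have finW: "finite W" unfolding W_def by (rule words_finite)
  have "replicate m 0 \<in> W" unfolding W_def words_def by auto
  then have Wne: "W \<noteq> {}" by auto
  define Q where "Q = card W"
  have Q1: "Q \<ge> 1" unfolding Q_def using finW Wne by (simp add: Suc_le_eq card_gt_0_iff)
  obtain g where g: "bij_betw g {..<Q} W"
    using ex_bij_betw_nat_finite[OF finW] unfolding Q_def atLeast0LessThan by blast
  have gW: "q < Q \<Longrightarrow> g q \<in> words R m" for q using g unfolding W_def by (auto dest: bij_betwE)
  define \<sigma> where "\<sigma> q = sum_sigma2 M eps m (fw (g q))" for q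
  have \<sigma>pos: "q < Q \<Longrightarrow> \<sigma> q > 0" for q unfolding \<sigma>_def using sigma_pos gW by blast
  define d where "d i q = (if i = q then sqrt (real R ^ m * \<sigma> q) else 0)" for i q
  define ms where "ms = (\<lambda>q::nat. m)"
  define fs where "fs q = fw (g q)" for q
  define K where "K = real (m-1)"
  have K0: "K \<ge> 0" unfolding K_def by simp
  define kap where "kap i \<omega> = bit_sel p r (eps i \<omega>)" for i \<omega>
  define X where "X n \<omega> = T_SO (\<lambda>i \<omega>. bit_sel p r (eps i \<omega>)) (2 ^ r) m n \<omega> - T_quad M eps Q Q d ms fs n \<omega>" for n \<omega>
  define bn where "bn n = K / (real n * sqrt (real n)) + K / (real n * real (n + 1 - m))" for n
  define Y where "Y n \<omega> = (\<Sum>q<Q. real R ^ m * (K\<^sup>2 / real n + K / sqrt (real n) + (Dv (g q) (n + 1 - m) \<omega>)\<^sup>2 * bn n))" for n \<omega>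
  have kapR: "\<forall>i \<omega>. kap i \<omega> < R" unfolding kap_def by (simp add: bit_sel_less)
  have R1: "R \<ge> 1" by simp
  have TSO: "T_SO (\<lambda>i \<omega>. bit_sel p r (eps i \<omega>)) (2 ^ r) m n \<omega>
      = (\<Sum>q<Q. real R ^ m * (csum R m kap n (g q) \<omega>)\<^sup>2 / real n)" for n \<omega>
  proof -
    have "T_SO (\<lambda>i \<omega>. bit_sel p r (eps i \<omega>)) (2 ^ r) m n \<omega> = T_SO kap R m n \<omega>"
      unfolding kap_def by simp
    also have "\<dots> = real R ^ m / real n * (\<Sum>w\<in>W. (csum R m kap n w \<omega>)\<^sup>2)"
      unfolding W_def by (rule TSO_eq[OF m2 R1 kapR])
    also have "(\<Sum>w\<in>W. (csum R m kap n w \<omega>)\<^sup>2) = (\<Sum>q<Q. (csum R m kap n (g q) \<omega>)\<^sup>2)"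
      by (rule sum.reindex_bij_betw[OF g, symmetric])
    finally show ?thesis by (simp add: sum_distrib_left)
  qed
  have TQ: "T_quad M eps Q Q d ms fs n \<omega> = (\<Sum>q<Q. real R ^ m * (Dv (g q) (n + 1 - m) \<omega>)\<^sup>2 / real (n + 1 - m))"
    if n: "n \<ge> m" for n \<omega>
  proof -
    define N where "N = n + 1 - m"
    have N0: "real N > 0" using n unfolding N_def by simp
    show ?thesis unfolding T_quad_def N_def[symmetric]
    proof (intro sum.cong refl)
      fix i assume i: "i \<in> {..<Q}"
      have "(\<Sum>q<Q. d i q * sum_stat M eps (ms q) (fs q) n \<omega>) = (\<Sum>q<Q. if i = q then d i i * sum_stat M eps (ms i) (fs i) n \<omega> else 0)"
        by (intro sum.cong refl) (simp add: d_def)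
      also have "\<dots> = d i i * sum_stat M eps (ms i) (fs i) n \<omega>" using i by simp
      also have "\<dots> = sqrt (real R ^ m * \<sigma> i) * (Dv (g i) N \<omega> / (sqrt (\<sigma> i) * sqrt (real N)))"
      proof -
        have gi: "g i \<in> words R m" using gW i by simp
        show ?thesis unfolding d_def ms_def fs_def sum_stat_eq[OF gi] \<sigma>_def N_def using i by simp
      qed
      finally have e: "(\<Sum>q<Q. d i q * sum_stat M eps (ms q) (fs q) n \<omega>) = sqrt (real R ^ m * \<sigma> i) * (Dv (g i) N \<omega> / (sqrt (\<sigma> i) * sqrt (real N)))" .
      have sp: "\<sigma> i > 0" using \<sigma>pos i by simp
      show "(\<Sum>q<Q. d i q * sum_stat M eps (ms q) (fs q) n \<omega>)\<^sup>2 = real R ^ m * (Dv (g i) N \<omega>)\<^sup>2 / real N"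
        unfolding e using sp N0 by (simp add: power_mult_distrib power_divide real_sqrt_mult)
    qed
  qed
  have bn0: "bn n \<ge> 0" for n unfolding bn_def using K0 by simp
  have XY: "\<bar>X n \<omega>\<bar> \<le> Y n \<omega>" if n: "n \<ge> m" for n \<omega>
  proof -
    define N where "N = n + 1 - m"
    have "X n \<omega> = (\<Sum>q<Q. real R ^ m * ((csum R m kap n (g q) \<omega>)\<^sup>2 / real n - (Dv (g q) N \<omega>)\<^sup>2 / real N))"
      unfolding X_def TSO TQ[OF n] N_def by (simp add: sum_subtractf algebra_simps)
    then have "\<bar>X n \<omega>\<bar> \<le> (\<Sum>q<Q. \<bar>real R ^ m * ((csum R m kap n (g q) \<omega>)\<^sup>2 / real n - (Dv (g q) N \<omega>)\<^sup>2 / real N)\<bar>)"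
      by (simp only: sum_abs)
    also have "\<dots> \<le> Y n \<omega>" unfolding Y_def
    proof (intro sum_mono)
      fix q assume q: "q \<in> {..<Q}"
      have cl: "\<bar>csum R m kap n (g q) \<omega> - Dv (g q) N \<omega>\<bar> \<le> K"
        using cyc_lin[OF n, of "g q" \<omega>] unfolding K_def N_def kap_def by simp
      have "\<bar>(csum R m kap n (g q) \<omega>)\<^sup>2 / real n - (Dv (g q) N \<omega>)\<^sup>2 / real N\<bar>
          \<le> K\<^sup>2 / real n + K / sqrt (real n) + (Dv (g q) N \<omega>)\<^sup>2 * (K / (real n * sqrt (real n)) + K / (real n * real N))"
        by (rule sq_diff_bound[OF cl K0]) (use n m2 in \<open>auto simp: N_def K_def\<close>)
      then show "\<bar>real R ^ m * ((csum R m kap n (g q) \<omega>)\<^sup>2 / real n - (Dv (g q) N \<omega>)\<^sup>2 / real N)\<bar>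
          \<le> real R ^ m * (K\<^sup>2 / real n + K / sqrt (real n) + (Dv (g q) (n + 1 - m) \<omega>)\<^sup>2 * bn n)"
        unfolding bn_def N_def by (simp add: abs_mult)
    qed
    finally show ?thesis .
  qed
  have Y0: "Y n \<omega> \<ge> 0" for n \<omega>
    unfolding Y_def using K0 bn0 by (intro sum_nonneg mult_nonneg_nonneg add_nonneg_nonneg) auto
  have Ymeas: "Y n \<in> borel_measurable M" for n unfolding Y_def by measurable
  have Yint: "integrable M (Y n)" for n
    unfolding Y_def by (intro Bochner_Integration.integrable_sum Bochner_Integration.integrable_mult_right
      Bochner_Integration.integrable_add integrable_const Dv_sq_int
      Bochner_Integration.integrable_mult_left)
  have EY: "expectation (Y n) \<le> real Q * real R ^ m * (K\<^sup>2 / real n + K / sqrt (real n) + K / sqrt (real n) + K / real n)"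
    if n: "n \<ge> m" for n
  proof -
    define N where "N = n + 1 - m"
    have "expectation (Y n) = (\<Sum>q<Q. real R ^ m * (K\<^sup>2 / real n + K / sqrt (real n) + expectation (\<lambda>\<omega>. (Dv (g q) N \<omega>)\<^sup>2) * bn n))"
      unfolding Y_def N_def
      by (simp add: Bochner_Integration.integral_sum Bochner_Integration.integral_add Dv_sq_int prob_space integrable_mult_left)
    also have "\<dots> \<le> (\<Sum>q<Q. real R ^ m * (K\<^sup>2 / real n + K / sqrt (real n) + real N * bn n))"
    proof (intro sum_mono mult_left_mono add_left_mono)
      fix q assume q: "q \<in> {..<Q}"
      show "expectation (\<lambda>\<omega>. (Dv (g q) N \<omega>)\<^sup>2) * bn n \<le> real N * bn n"
        using Dv_sq_exp[OF gW] q bn0 by (intro mult_right_mono) auto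
    qed simp
    also have "real N * bn n \<le> K / sqrt (real n) + K / real n"
    proof -
      have N0: "real N > 0" "real N \<le> real n" using n m2 unfolding N_def by auto
      have n0: "real n > 0" using N0 by simp
      have "real N * bn n = K * real N / (real n * sqrt (real n)) + K / real n"
        unfolding bn_def N_def[symmetric] using N0 n0 by (simp add: field_simps)
      also have "K * real N / (real n * sqrt (real n)) \<le> K * real n / (real n * sqrt (real n))"
        using N0 n0 K0 by (intro divide_right_mono mult_left_mono) auto
      also have "K * real n / (real n * sqrt (real n)) = K / sqrt (real n)" using n0 by simp
      finally show ?thesis by simp
    qed
    then have "(\<Sum>q<Q. real R ^ m * (K\<^sup>2 / real n + K / sqrt (real n) + real N * bn n))
        \<le> (\<Sum>q<Q. real R ^ m * (K\<^sup>2 / real n + K / sqrt (real n) + (K / sqrt (real n) + K / real n)))"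
      by (intro sum_mono mult_left_mono) auto
    also have "\<dots> = real Q * real R ^ m * (K\<^sup>2 / real n + K / sqrt (real n) + K / sqrt (real n) + K / real n)"
      by (simp add: algebra_simps)
    finally show ?thesis .
  qed
  have conv: "conv_prob_zero M X"
    unfolding conv_prob_zero_def
  proof (intro allI impI)
    fix e :: real assume e: "e > 0"
    define \<beta> where "\<beta> n = real Q * real R ^ m * (K\<^sup>2 / real n + K / sqrt (real n) + K / sqrt (real n) + K / real n) / e" for n
    have \<beta>lim: "\<beta> \<longlonglongrightarrow> 0"
    proof -
      have eq: "\<beta> = (\<lambda>n. (real Q * real R ^ m * (K\<^sup>2 + K) / e) * (1 / real n) + (2 * real Q * real R ^ m * K / e) * (1 / sqrt (real n)))"
        unfolding \<beta>_def by (auto simp: fun_eq_iff field_simps add_divide_distrib)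
      show ?thesis unfolding eq by (rule lim_aux)
    qed
    have ev: "eventually (\<lambda>n. measure M {\<omega> \<in> space M. e < \<bar>X n \<omega>\<bar>} \<le> \<beta> n) sequentially"
      using eventually_ge_at_top[of m]
    proof eventually_elim
      case (elim n)
      have "measure M {\<omega> \<in> space M. e < \<bar>X n \<omega>\<bar>} \<le> measure M {\<omega> \<in> space M. e \<le> Y n \<omega>}"
        by (rule finite_measure_mono) (use XY[OF elim] Ymeas in \<open>auto intro: order.trans less_imp_le\<close>)
      also have "\<dots> \<le> expectation (Y n) / e"
        by (rule integral_Markov_inequality_measure[OF Yint _ _ e]) (use Y0 in auto)
      also have "\<dots> \<le> \<beta> n" unfolding \<beta>_def using EY[OF elim] e by (simp add: divide_right_mono)
      finally show ?case .
    qed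
    show "(\<lambda>n. measure M {\<omega> \<in> space M. e < \<bar>X n \<omega>\<bar>}) \<longlonglongrightarrow> 0"
      by (rule tendsto_sandwich[OF _ ev tendsto_const \<beta>lim]) auto
  qed
  have valid: "\<forall>q<Q. valid_summing M eps (ms q) (fs q)"
    unfolding ms_def fs_def using valid gW by blast
  have Xeq: "(\<lambda>n \<omega>. T_SO (\<lambda>i \<omega>. bit_sel p r (eps i \<omega>)) (2 ^ r) m n \<omega> - T_quad M eps Q Q d ms fs n \<omega>) = X"
    by (simp add: fun_eq_iff X_def)
  show ?thesis
    by (rule exI[of _ Q], rule exI[of _ Q], rule exI[of _ d], rule exI[of _ ms], rule exI[of _ fs])
       (use Q1 valid conv in \<open>simp only: Xeq\<close>)
qed

end

theorem lemma2:
  fixes M :: "'a measure" and eps :: "nat \<Rightarrow> 'a \<Rightarrow> real"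
    and m r :: nat and p :: "nat \<Rightarrow> nat"
  assumes "prob_space M"
    and "prob_space.indep_vars M (\<lambda>_. borel) eps UNIV"
    and "\<forall>i. distr M lborel (eps i) = uniform_measure lborel {0..1}"
    and "m \<ge> 2" and "r \<ge> 1"
    and "inj_on p {..<r}" and "\<forall>j<r. p j \<ge> 1"
  shows "\<exists>(\<tau>::nat) (Q::nat) (d::nat \<Rightarrow> nat \<Rightarrow> real) (ms::nat \<Rightarrow> nat)
            (fs::nat \<Rightarrow> (nat \<Rightarrow> real) \<Rightarrow> real).
           \<tau> \<ge> 1 \<and> Q \<ge> 1 \<and> (\<forall>q<Q. valid_summing M eps (ms q) (fs q)) \<and>
           conv_prob_zero M (\<lambda>n \<omega>. T_SO (\<lambda>i \<omega>. bit_sel p r (eps i \<omega>)) (2 ^ r) m n \<omega>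
                                    - T_quad M eps \<tau> Q d ms fs n \<omega>)"
proof -
  have "lsetup M eps m r p"
    using assms unfolding lsetup_def lsetup_axioms_def by auto
  then interpret L: lsetup M eps m r p .
  show ?thesis by (rule L.main)
qed

end
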